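(* Let $(B,\cdot)$ be an algebra over a field $\mathbb K$ of characteristic $0$ which is $\rho$-associative, i.e. $(b_1 b_2) b_3 - b_3 (b_1 b_2)=0$ for all $b_1,b_2,b_3\in B$. Then the bracket $[x,y]=xy-yx$ makes $B$ an Acaa-algebra, and $(B,[\cdot,\cdot])$ is also a $2$-step nilpotent Lie algebra (i.e. $[[x,y],z]=0$ for all $x,y,z\in B$).
   Context: An Acaa-algebra over a field $\mathbb K$ of characteristic $0$ is a $\mathbb K$-vector space $A$ with a bilinear product $[\cdot,\cdot]$ which is anticommutative, $[x,y]=-[y,x]$, and satisfies $[x_1,[x_2,x_3]]=[x_2,[x_3,x_1]]$ for all $x_1,x_2,x_3\in A$. An algebra here is a vector space with a bilinear (not necessarily associative) product. *)

theory Defs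
  imports Main "HOL.Vector_Spaces"
begin

definition bilinear_op :: "('k::field \<Rightarrow> 'b::ab_group_add \<Rightarrow> 'b) \<Rightarrow> ('b \<Rightarrow> 'b \<Rightarrow> 'b) \<Rightarrow> bool" where
  "bilinear_op s m \<longleftrightarrow>
     (\<forall>x y z. m (x + y) z = m x z + m y z \<and> m x (y + z) = m x y + m x z) \<and>
     (\<forall>c x y. m (s c x) y = s c (m x y) \<and> m x (s c y) = s c (m x y))"

definition algebra_over :: "('k::field \<Rightarrow> 'b::ab_group_add \<Rightarrow> 'b) \<Rightarrow> ('b \<Rightarrow> 'b \<Rightarrow> 'b) \<Rightarrow> bool" where
  "algebra_over s m \<longleftrightarrow> vector_space s \<and> bilinear_op s m"

definition rho_associative :: "('b::ab_group_add \<Rightarrow> 'b \<Rightarrow> 'b) \<Rightarrow> bool" where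
  "rho_associative m \<longleftrightarrow> (\<forall>b1 b2 b3. m (m b1 b2) b3 - m b3 (m b1 b2) = 0)"

definition commutator :: "('b::ab_group_add \<Rightarrow> 'b \<Rightarrow> 'b) \<Rightarrow> 'b \<Rightarrow> 'b \<Rightarrow> 'b" where
  "commutator m x y = m x y - m y x"

definition acaa_algebra :: "('k::field \<Rightarrow> 'b::ab_group_add \<Rightarrow> 'b) \<Rightarrow> ('b \<Rightarrow> 'b \<Rightarrow> 'b) \<Rightarrow> bool" where
  "acaa_algebra s br \<longleftrightarrow> algebra_over s br \<and>
     (\<forall>x y. br x y = - br y x) \<and>
     (\<forall>x1 x2 x3. br x1 (br x2 x3) = br x2 (br x3 x1))"

definition lie_algebra :: "('k::field \<Rightarrow> 'b::ab_group_add \<Rightarrow> 'b) \<Rightarrow> ('b \<Rightarrow> 'b \<Rightarrow> 'b) \<Rightarrow> bool" where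
  "lie_algebra s br \<longleftrightarrow> algebra_over s br \<and>
     (\<forall>x. br x x = 0) \<and>
     (\<forall>x y z. br x (br y z) + br y (br z x) + br z (br x y) = 0)"

definition two_step_nilpotent_lie_algebra :: "('k::field \<Rightarrow> 'b::ab_group_add \<Rightarrow> 'b) \<Rightarrow> ('b \<Rightarrow> 'b \<Rightarrow> 'b) \<Rightarrow> bool" where
  "two_step_nilpotent_lie_algebra s br \<longleftrightarrow> lie_algebra s br \<and> (\<forall>x y z. br (br x y) z = 0)"

end

theory Submission
  imports Defs
begin

theorem mainTheorem9:
  fixes s :: "'k::field_char_0 \<Rightarrow> 'b::ab_group_add \<Rightarrow> 'b"
    and m :: "'b \<Rightarrow> 'b \<Rightarrow> 'b"
  assumes "algebra_over s m"
    and "rho_associative m"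
  shows "acaa_algebra s (commutator m) \<and> two_step_nilpotent_lie_algebra s (commutator m)"
proof -
  have vs0: "vector_space s" and bl: "bilinear_op s m" using assms(1) unfolding algebra_over_def by auto
  have vs: "module s" using vs0 by (simp add: module_iff_vector_space)
  have addL: "\<And>x y z. m (x + y) z = m x z + m y z" and addR: "\<And>x y z. m x (y + z) = m x y + m x z"
   and scL: "\<And>c x y. m (s c x) y = s c (m x y)" and scR: "\<And>c x y. m x (s c y) = s c (m x y)"
    using bl unfolding bilinear_op_def by auto
  have rho: "\<And>a b c. m (m a b) c = m c (m a b)" using assms(2) unfolding rho_associative_def by auto
  have diffL: "\<And>x y z. m (x - y) z = m x z - m y z"
  proof -
    fix x y z
    have "m (x - y) z + m y z = m x z" using addL[of "x - y" y z] by simp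
    then show "m (x - y) z = m x z - m y z" by (simp add: eq_diff_eq)
  qed
  have diffR: "\<And>x y z. m x (y - z) = m x y - m x z"
  proof -
    fix x y z
    have "m x (y - z) + m x z = m x y" using addR[of x "y - z" z] by simp
    then show "m x (y - z) = m x y - m x z" by (simp add: eq_diff_eq)
  qed
  have sdiff: "\<And>c a b. s c (a - b) = s c a - s c b"
    using module.scale_right_diff_distrib[OF vs] by blast
  have sadd: "\<And>c a b. s c (a + b) = s c a + s c b"
    using module.scale_right_distrib[OF vs] by blast
  let ?b = "commutator m"
  have nil: "\<And>x y z. ?b x (?b y z) = 0"
    unfolding commutator_def by (simp add: diffL diffR rho)
  have nil2: "\<And>x y z. ?b (?b x y) z = 0"
    unfolding commutator_def by (simp add: diffL diffR rho)
  have bil: "bilinear_op s ?b"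
    unfolding bilinear_op_def commutator_def
    by (simp add: addL addR scL scR sdiff algebra_simps)
  have alg: "algebra_over s ?b" using vs0 bil unfolding algebra_over_def by auto
  have anti: "\<And>x y. ?b x y = - ?b y x" unfolding commutator_def by simp
  show ?thesis
    unfolding acaa_algebra_def two_step_nilpotent_lie_algebra_def lie_algebra_def
    using alg anti nil nil2 by (simp add: commutator_def)
qed

end
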